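(* If an acyclic VCCR $f$ satisfies Positive Involvement in Defeat and Majority Defeat, then the VSCC $\overline f$ satisfies Tolerant Positive Involvement. In particular, the Split Cycle VSCC $\overline{sc}$ and the Weighted Covering VSCC $\overline{wc}$ satisfy Tolerant Positive Involvement, since $sc$ and $wc$ both satisfy Positive Involvement in Defeat and Majority Defeat.
   Context: Profiles: $\mathbf P:V\to\mathcal L(X)$, $V$ nonempty finite set of voters, $X=X(\mathbf P)$ nonempty finite set of candidates, $\mathcal L(X)$ strict linear orders. $\mathrm{Margin}_{\mathbf P}(x,y)$ = #voters ranking $x$ above $y$ minus #ranking $y$ above $x$; $x$ majority preferred to $y$ if $>0$. A majority path: sequence of candidates with positive consecutive margins; strength = minimum of those margins. A VCCR $f$ assigns to each profile an asymmetric relation $f(\mathbf P)$ on $X(\mathbf P)$; it is acyclic if every $f(\mathbf P)$ has no cycle. $\overline f(\mathbf P)=\{x: \text{no } y \text{ with } (y,x)\in f(\mathbf P)\}$ (a VSCC when $f$ is acyclic). $sc$: $(x,y)\in sc(\mathbf P)$ iff $\mathrm{Margin}_{\mathbf P}(x,y)>0$ exceeds the strength of every majority path from $y$ to $x$. $wc$: $(x,y)\in wc(\mathbf P)$ iff $\mathrm{Margin}_{\mathbf P}(x,y)>0$ and $\mathrm{Margin}_{\mathbf P}(x,z)\ge\mathrm{Margin}_{\mathbf P}(y,z)$ for all $z$. Positive Involvement in Defeat: if $(x,y)\notin f(\mathbf P)$ and $\mathbf P'$ adds one new voter ranking $y$ above $x$, then $(x,y)\notin f(\mathbf P')$. Majority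 Defeat: $(x,y)\in f(\mathbf P)$ implies $\mathrm{Margin}_{\mathbf P}(x,y)>0$. A VSCC $F$ satisfies Tolerant Positive Involvement if whenever $x\in F(\mathbf P)$ and $\mathbf P'$ is obtained by adding one new voter who ranks $x$ above every other candidate $y$ such that $x$ is not majority preferred to $y$ in $\mathbf P$, then $x\in F(\mathbf P')$. *)

theory Defs
  imports Main
begin

text \<open>A profile is represented by a set of voters V, a set of candidates X and a ballot
  function P assigning to each voter a strict linear order (x,y) \<in> P i meaning
  "voter i ranks x above y". Voters outside V get the empty ballot, so that the
  profile is determined by its restriction to V.\<close>

definition lin_order_on :: "'c set \<Rightarrow> 'c rel \<Rightarrow> bool" where
  "lin_order_on X L \<longleftrightarrow> strict_linear_order_on X L \<and> L \<subseteq> X \<times> X"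

definition profile :: "'v set \<Rightarrow> 'c set \<Rightarrow> ('v \<Rightarrow> 'c rel) \<Rightarrow> bool" where
  "profile V X P \<longleftrightarrow> finite V \<and> V \<noteq> {} \<and> finite X \<and> X \<noteq> {}
     \<and> (\<forall>i\<in>V. lin_order_on X (P i)) \<and> (\<forall>i. i \<notin> V \<longrightarrow> P i = {})"

definition margin :: "'v set \<Rightarrow> ('v \<Rightarrow> 'c rel) \<Rightarrow> 'c \<Rightarrow> 'c \<Rightarrow> int" where
  "margin V P x y = int (card {i\<in>V. (x,y) \<in> P i}) - int (card {i\<in>V. (y,x) \<in> P i})"

type_synonym ('v,'c) vccr = "'v set \<Rightarrow> 'c set \<Rightarrow> ('v \<Rightarrow> 'c rel) \<Rightarrow> 'c rel"
type_synonym ('v,'c) vscc = "'v set \<Rightarrow> 'c set \<Rightarrow> ('v \<Rightarrow> 'c rel) \<Rightarrow> 'c set"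

definition is_vccr :: "('v,'c) vccr \<Rightarrow> bool" where
  "is_vccr f \<longleftrightarrow> (\<forall>V X P. profile V X P \<longrightarrow> f V X P \<subseteq> X \<times> X \<and> asym (f V X P))"

definition acyclic_vccr :: "('v,'c) vccr \<Rightarrow> bool" where
  "acyclic_vccr f \<longleftrightarrow> (\<forall>V X P. profile V X P \<longrightarrow> acyclic (f V X P))"

definition undefeated :: "('v,'c) vccr \<Rightarrow> ('v,'c) vscc" where
  "undefeated f V X P = {x\<in>X. \<not> (\<exists>y. (y,x) \<in> f V X P)}"

definition positive_involvement_in_defeat :: "('v,'c) vccr \<Rightarrow> bool" where
  "positive_involvement_in_defeat f \<longleftrightarrow>
     (\<forall>V X P i L x y. profile V X P \<and> i \<notin> V \<and> lin_order_on X L \<and> x \<in> X \<and> y \<in> X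
        \<and> (x,y) \<notin> f V X P \<and> (y,x) \<in> L
        \<longrightarrow> (x,y) \<notin> f (insert i V) X (P(i := L)))"

definition majority_defeat :: "('v,'c) vccr \<Rightarrow> bool" where
  "majority_defeat f \<longleftrightarrow>
     (\<forall>V X P x y. profile V X P \<and> (x,y) \<in> f V X P \<longrightarrow> margin V P x y > 0)"

definition tolerant_positive_involvement :: "('v,'c) vscc \<Rightarrow> bool" where
  "tolerant_positive_involvement F \<longleftrightarrow>
     (\<forall>V X P i L x. profile V X P \<and> i \<notin> V \<and> lin_order_on X L \<and> x \<in> F V X P
        \<and> (\<forall>y\<in>X. y \<noteq> x \<and> \<not> margin V P x y > 0 \<longrightarrow> (x,y) \<in> L)
        \<longrightarrow> x \<in> F (insert i V) X (P(i := L)))"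

definition majority_path :: "'v set \<Rightarrow> 'c set \<Rightarrow> ('v \<Rightarrow> 'c rel) \<Rightarrow> 'c list \<Rightarrow> bool" where
  "majority_path V X P xs \<longleftrightarrow> length xs \<ge> 2 \<and> distinct xs \<and> set xs \<subseteq> X
     \<and> (\<forall>k. k + 1 < length xs \<longrightarrow> margin V P (xs ! k) (xs ! (k+1)) > 0)"

definition path_strength :: "'v set \<Rightarrow> ('v \<Rightarrow> 'c rel) \<Rightarrow> 'c list \<Rightarrow> int" where
  "path_strength V P xs = Min {margin V P (xs ! k) (xs ! (k+1)) | k. k + 1 < length xs}"

definition split_cycle :: "('v,'c) vccr" where
  "split_cycle V X P = {(x,y). x \<in> X \<and> y \<in> X \<and> margin V P x y > 0
     \<and> (\<forall>xs. majority_path V X P xs \<and> hd xs = y \<and> last xs = x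
            \<longrightarrow> margin V P x y > path_strength V P xs)}"

definition weighted_covering :: "('v,'c) vccr" where
  "weighted_covering V X P = {(x,y). x \<in> X \<and> y \<in> X \<and> margin V P x y > 0
     \<and> (\<forall>z\<in>X. margin V P x z \<ge> margin V P y z)}"

end

theory Submission
  imports Defs
begin

lemma lin_asym: "lin_order_on X L \<Longrightarrow> (a,b) \<in> L \<Longrightarrow> (b,a) \<notin> L"
  unfolding lin_order_on_def strict_linear_order_on_def
  by (meson irrefl_def transD)

lemma lin_irr: "lin_order_on X L \<Longrightarrow> (a,a) \<notin> L"
  unfolding lin_order_on_def strict_linear_order_on_def irrefl_def by blast

lemma lin_tot: "lin_order_on X L \<Longrightarrow> a \<in> X \<Longrightarrow> b \<in> X \<Longrightarrow> a \<noteq> b \<Longrightarrow> (a,b) \<in> L \<or> (b,a) \<in> L"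
  unfolding lin_order_on_def strict_linear_order_on_def total_on_def by blast

lemma lin_trans: "lin_order_on X L \<Longrightarrow> (a,b) \<in> L \<Longrightarrow> (b,c) \<in> L \<Longrightarrow> (a,c) \<in> L"
  unfolding lin_order_on_def strict_linear_order_on_def by (meson transD)

lemma card_upd:
  assumes "finite V" "i \<notin> V"
  shows "card {j \<in> insert i V. (a,b) \<in> (P(i:=L)) j} = card {j\<in>V. (a,b) \<in> P j} + (if (a,b) \<in> L then 1 else 0)"
proof -
  let ?S = "{j\<in>V. (a,b) \<in> P j}"
  have fin: "finite ?S" using assms by simp
  have "{j \<in> insert i V. (a,b) \<in> (P(i:=L)) j} = (if (a,b) \<in> L then insert i ?S else ?S)"
    using assms by auto
  then show ?thesis using fin assms by auto
qed

lemma margin_upd: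
  assumes "finite V" "i \<notin> V"
  shows "margin (insert i V) (P(i:=L)) a b = margin V P a b + (if (a,b) \<in> L then 1 else 0) - (if (b,a) \<in> L then 1 else 0)"
  unfolding margin_def card_upd[OF assms] by auto

lemma margin_anti: "margin V P a b = - margin V P b a"
  unfolding margin_def by simp

lemma margin_self: "margin V P a a = 0"
  unfolding margin_def by simp

lemma profile_upd:
  assumes "profile V X P" "i \<notin> V" "lin_order_on X L"
  shows "profile (insert i V) X (P(i:=L))"
  using assms unfolding profile_def by auto

lemma margin_upd_bounds:
  assumes "profile V X P" "i \<notin> V" "lin_order_on X L"
  shows "margin (insert i V) (P(i:=L)) a b \<ge> margin V P a b - 1"
        "margin (insert i V) (P(i:=L)) a b \<le> margin V P a b + 1"
  using margin_upd[of V i P L a b] assms lin_asym[OF assms(3), of a b] unfolding profile_def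
  by (auto split: if_splits)

lemma vccr_sub: "is_vccr f \<Longrightarrow> profile V X P \<Longrightarrow> f V X P \<subseteq> X \<times> X"
  unfolding is_vccr_def by simp

lemma md_pos: "majority_defeat f \<Longrightarrow> profile V X P \<Longrightarrow> (x,y) \<in> f V X P \<Longrightarrow> margin V P x y > 0"
  unfolding majority_defeat_def by simp

lemma general:
  assumes "is_vccr f" "positive_involvement_in_defeat f" "majority_defeat f"
  shows "tolerant_positive_involvement (undefeated f)"
  unfolding tolerant_positive_involvement_def
proof (intro allI impI)
  fix V X P i L x
  assume H: "profile V X P \<and> i \<notin> V \<and> lin_order_on X L \<and> x \<in> undefeated f V X P
        \<and> (\<forall>y\<in>X. y \<noteq> x \<and> \<not> margin V P x y > 0 \<longrightarrow> (x,y) \<in> L)"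
  have pr: "profile V X P" and iV: "i \<notin> V" and L: "lin_order_on X L" using H by auto
  have "x \<in> undefeated f V X P" using H by blast
  then have xX: "x \<in> X" and nd: "\<And>y. (y,x) \<notin> f V X P" unfolding undefeated_def by auto
  have pr': "profile (insert i V) X (P(i:=L))" by (rule profile_upd[OF pr iV L])
  show "x \<in> undefeated f (insert i V) X (P(i := L))"
    unfolding undefeated_def
  proof (rule CollectI, rule conjI[OF xX], rule notI, elim exE)
    fix y assume yx: "(y,x) \<in> f (insert i V) X (P(i := L))"
    have "f (insert i V) X (P(i:=L)) \<subseteq> X \<times> X" by (rule vccr_sub[OF assms(1) pr'])
    then have yX: "y \<in> X" using yx by blast
    have md: "majority_defeat f" by (rule assms(3))
    have m': "margin (insert i V) (P(i:=L)) y x > 0" by (rule md_pos) fact+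
    have yne: "y \<noteq> x"
    proof
      assume "y = x" with m' show False by (simp add: margin_self)
    qed
    show False
    proof (cases "(x,y) \<in> L")
      case True
      have "(y,x) \<notin> f (insert i V) X (P(i := L))"
        using assms(2) pr iV L yX xX nd[of y] True
        unfolding positive_involvement_in_defeat_def by (elim allE[of _ V] allE[of _ X] allE[of _ P] allE[of _ i] allE[of _ L] allE[of _ y] allE[of _ x]) blast
      then show ?thesis using yx by contradiction
    next
      case False
      then have "margin V P x y > 0" using H yX yne by blast
      then show ?thesis using margin_upd_bounds(1)[OF pr iV L, of x y] m'
        margin_anti[of "insert i V" "P(i:=L)" x y] by linarith
    qed
  qed
qed


lemma margin_pos_asym: "margin V P x y > 0 \<Longrightarrow> \<not> margin V P y x > 0"
  using margin_anti[of V P x y] by linarith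

lemma asym_sub:
  assumes "r \<subseteq> {(x,y). margin V P x y > 0}"
  shows "asym r"
proof (rule asymI)
  fix a b assume "(a,b) \<in> r"
  then have "margin V P a b > 0" using assms by blast
  then have "\<not> margin V P b a > 0" by (rule margin_pos_asym)
  then show "(b,a) \<notin> r" using assms by blast
qed

lemma sc_sub: "split_cycle V X P \<subseteq> {(x,y). x \<in> X \<and> y \<in> X \<and> margin V P x y > 0}"
  unfolding split_cycle_def by (rule subsetI) (simp split: prod.splits)

lemma wc_sub: "weighted_covering V X P \<subseteq> {(x,y). x \<in> X \<and> y \<in> X \<and> margin V P x y > 0}"
  unfolding weighted_covering_def by (rule subsetI) (simp split: prod.splits)

lemma sub_vccr:
  assumes "\<And>V X P. f V X P \<subseteq> {(x,y). x \<in> X \<and> y \<in> X \<and> margin V P x y > 0}"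
  shows "is_vccr f" "majority_defeat f"
proof -
  show "is_vccr f" unfolding is_vccr_def
  proof (intro allI impI conjI)
    fix V X P
    show "f V X P \<subseteq> X \<times> X" using assms[of V X P] by blast
    show "asym (f V X P)" by (rule asym_sub[of _ V P]) (use assms[of V X P] in blast)
  qed
  show "majority_defeat f" unfolding majority_defeat_def
  proof (intro allI impI)
    fix V X P x y assume "profile V X P \<and> (x, y) \<in> f V X P"
    then show "margin V P x y > 0" using assms[of V X P] by blast
  qed
qed

lemma sc_vccr: "is_vccr split_cycle" and sc_md: "majority_defeat split_cycle"
  using sub_vccr[OF sc_sub] by auto

lemma wc_vccr: "is_vccr weighted_covering" and wc_md: "majority_defeat weighted_covering"
  using sub_vccr[OF wc_sub] by auto

lemma wc_pid: "positive_involvement_in_defeat weighted_covering"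
  unfolding positive_involvement_in_defeat_def
proof (intro allI impI)
  fix V X P i L x y
  assume H: "profile V X P \<and> i \<notin> V \<and> lin_order_on X L \<and> x \<in> X \<and> y \<in> X
        \<and> (x,y) \<notin> weighted_covering V X P \<and> (y,x) \<in> L"
  have pr: "profile V X P" and iV: "i \<notin> V" and L: "lin_order_on X L"
    and xX: "x \<in> X" and yX: "y \<in> X" and yxL: "(y,x) \<in> L" using H by auto
  have fV: "finite V" using pr unfolding profile_def by auto
  let ?m' = "margin (insert i V) (P(i:=L))"
  show "(x,y) \<notin> weighted_covering (insert i V) X (P(i := L))"
  proof (cases "margin V P x y > 0")
    case False
    have "?m' x y \<le> margin V P x y - 1"
      using margin_upd[OF fV iV, of P L x y] yxL lin_asym[OF L yxL] by simp
    then show ?thesis using False unfolding weighted_covering_def by auto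
  next
    case True
    then obtain z where zX: "z \<in> X" and lt: "margin V P x z < margin V P y z"
      using H xX yX unfolding weighted_covering_def by auto
    have zx: "z \<noteq> x" using lt True margin_self[of V P x] margin_anti[of V P x y] by auto
    have zy: "z \<noteq> y" using lt True margin_self[of V P y] by auto
    have "?m' x z < ?m' y z"
    proof -
      have e1: "?m' x z = margin V P x z + (if (x,z) \<in> L then 1 else 0) - (if (z,x) \<in> L then 1 else 0)"
        by (rule margin_upd[OF fV iV])
      have e2: "?m' y z = margin V P y z + (if (y,z) \<in> L then 1 else 0) - (if (z,y) \<in> L then 1 else 0)"
        by (rule margin_upd[OF fV iV])
      have t1: "(x,z) \<in> L \<or> (z,x) \<in> L" using lin_tot[OF L xX zX] zx by auto
      have t2: "(y,z) \<in> L \<or> (z,y) \<in> L" using lin_tot[OF L yX zX] zy by auto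
      have "(x,z) \<in> L \<Longrightarrow> (y,z) \<in> L" using lin_trans[OF L yxL] by blast
      then show ?thesis using e1 e2 t1 t2 lt lin_asym[OF L, of x z] lin_asym[OF L, of y z]
        by (auto split: if_splits)
    qed
    then show ?thesis using zX unfolding weighted_covering_def by (auto simp: not_le)
  qed
qed

lemma sc_pid: "positive_involvement_in_defeat split_cycle"
  unfolding positive_involvement_in_defeat_def
proof (intro allI impI)
  fix V X P i L x y
  assume H: "profile V X P \<and> i \<notin> V \<and> lin_order_on X L \<and> x \<in> X \<and> y \<in> X
        \<and> (x,y) \<notin> split_cycle V X P \<and> (y,x) \<in> L"
  have pr: "profile V X P" and iV: "i \<notin> V" and L: "lin_order_on X L"
    and xX: "x \<in> X" and yX: "y \<in> X" and yxL: "(y,x) \<in> L" using H by auto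
  have fV: "finite V" using pr unfolding profile_def by auto
  let ?m' = "margin (insert i V) (P(i:=L))"
  have dec: "?m' x y = margin V P x y - 1"
    using margin_upd[OF fV iV, of P L x y] yxL lin_asym[OF L yxL] by simp
  show "(x,y) \<notin> split_cycle (insert i V) X (P(i := L))"
  proof (cases "?m' x y > 0")
    case False
    then show ?thesis unfolding split_cycle_def by simp
  next
    case True
    then have pos: "margin V P x y > 0" using dec by simp
    have "(x,y) \<notin> split_cycle V X P" using H by blast
    then have "\<not> (\<forall>xs. majority_path V X P xs \<and> hd xs = y \<and> last xs = x
            \<longrightarrow> margin V P x y > path_strength V P xs)"
      using pos xX yX unfolding split_cycle_def by simp
    then obtain xs where mp: "majority_path V X P xs" and hd: "hd xs = y" and lst: "last xs = x"
      and st0: "\<not> margin V P x y > path_strength V P xs"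
      by blast
    have st: "path_strength V P xs \<ge> margin V P x y" using st0 by simp
    let ?K = "{k. k + 1 < length xs}"
    have len: "length xs \<ge> 2" using mp unfolding majority_path_def by auto
    have finK: "finite ?K" by (rule finite_subset[of _ "{..<length xs}"]) auto
    have neK: "0 \<in> ?K" using len by auto
    have each: "\<And>k. k + 1 < length xs \<Longrightarrow> margin V P (xs ! k) (xs ! (k+1)) \<ge> margin V P x y"
    proof -
      fix k assume k: "k + 1 < length xs"
      have "path_strength V P xs \<le> margin V P (xs ! k) (xs ! (k+1))"
        unfolding path_strength_def
      proof (rule Min_le)
        have "{margin V P (xs ! k) (xs ! (k+1)) | k. k + 1 < length xs} = (\<lambda>k. margin V P (xs ! k) (xs ! (k+1))) ` ?K"
          by blast
        then show "finite {margin V P (xs ! k) (xs ! (k+1)) | k. k + 1 < length xs}"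
          using finK by simp
        show "margin V P (xs ! k) (xs ! (k+1)) \<in> {margin V P (xs ! k) (xs ! (k+1)) | k. k + 1 < length xs}"
          using k by blast
      qed
      then show "margin V P (xs ! k) (xs ! (k+1)) \<ge> margin V P x y" using st by linarith
    qed
    have each': "\<And>k. k + 1 < length xs \<Longrightarrow> ?m' (xs ! k) (xs ! (k+1)) \<ge> ?m' x y"
    proof -
      fix k assume "k + 1 < length xs"
      then have "margin V P (xs ! k) (xs ! (k+1)) \<ge> margin V P x y" by (rule each)
      moreover have "?m' (xs ! k) (xs ! (k+1)) \<ge> margin V P (xs ! k) (xs ! (k+1)) - 1"
        by (rule margin_upd_bounds(1)[OF pr iV L])
      ultimately show "?m' (xs ! k) (xs ! (k+1)) \<ge> ?m' x y" using dec by linarith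
    qed
    have mp': "majority_path (insert i V) X (P(i:=L)) xs"
      using mp each' True unfolding majority_path_def by (meson less_le_trans)
    have seteq: "{?m' (xs ! k) (xs ! (k+1)) | k. k + 1 < length xs} = (\<lambda>k. ?m' (xs ! k) (xs ! (k+1))) ` ?K"
      by blast
    have st': "path_strength (insert i V) (P(i:=L)) xs \<ge> ?m' x y"
      unfolding path_strength_def
    proof (subst Min_ge_iff)
      show "finite {?m' (xs ! k) (xs ! (k+1)) | k. k + 1 < length xs}"
        unfolding seteq using finK by (rule finite_imageI)
      show "{?m' (xs ! k) (xs ! (k+1)) | k. k + 1 < length xs} \<noteq> {}"
        unfolding seteq using neK by blast
      show "\<forall>a\<in>{?m' (xs ! k) (xs ! (k+1)) | k. k + 1 < length xs}. ?m' x y \<le> a"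
        unfolding seteq using each' by blast
    qed
    have "\<not> (?m' x y > path_strength (insert i V) (P(i:=L)) xs)" using st' by simp
    then have "\<not> (\<forall>xs. majority_path (insert i V) X (P(i:=L)) xs \<and> hd xs = y \<and> last xs = x
            \<longrightarrow> ?m' x y > path_strength (insert i V) (P(i:=L)) xs)" using mp' hd lst by blast
    then show ?thesis unfolding split_cycle_def by simp
  qed
qed

theorem proposition5p12:
  shows "(\<forall>f :: ('v,'c) vccr. is_vccr f \<and> acyclic_vccr f
            \<and> positive_involvement_in_defeat f \<and> majority_defeat f
            \<longrightarrow> tolerant_positive_involvement (undefeated f))
         \<and> tolerant_positive_involvement (undefeated (split_cycle :: ('v,'c) vccr))
         \<and> tolerant_positive_involvement (undefeated (weighted_covering :: ('v,'c) vccr))"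
proof (intro conjI allI impI)
  fix f :: "('v,'c) vccr"
  assume "is_vccr f \<and> acyclic_vccr f \<and> positive_involvement_in_defeat f \<and> majority_defeat f"
  then show "tolerant_positive_involvement (undefeated f)" using general by blast
next
  show "tolerant_positive_involvement (undefeated (split_cycle :: ('v,'c) vccr))"
    by (rule general[OF sc_vccr sc_pid sc_md])
next
  show "tolerant_positive_involvement (undefeated (weighted_covering :: ('v,'c) vccr))"
    by (rule general[OF wc_vccr wc_pid wc_md])
qed

end
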